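(* Let $p\geq3$ be prime, $n\geq 2$, and $\Phi_{p^n}(T)=\sum_{k=0}^{p-1}T^{p^{n-1}k}$. In the transfinite Newton algorithm applied to $\Phi_{p^n}$: (1) the maximal slope at step $0$ is $s_0=0$ and $1\in\bar{\mathbb{F}}_p$ is a root of the residue polynomial of $\Phi^{(0,n)}=\Phi_{p^n}$; (2) choosing $z_0=1$, the maximal slope of $\mathrm{NP}(\Phi^{(1,n)})$ is $s_1=\frac{1}{p^{n-1}(p-1)}$, and $(-1)^n\zeta_{2(p-1)}$ is a root of the residue polynomial of $\Phi^{(1,n)}$ of multiplicity $p^{n-1}$. Consequently, choosing $z_1=(-1)^n\zeta_{2(p-1)}$, one has $\zeta_{p^n}^{(1)}=1+(-1)^n\zeta_{2(p-1)}\,p^{\frac{1}{p^{n-1}(p-1)}}$.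
   Context: $\mathbb{L}_p$ is the $p$-adic Mal'cev–Neumann field of formal sums $\sum_{x\in\mathbb{Q}}[\alpha_x]p^x$ ($\alpha_x\in\bar{\mathbb{F}}_p$, $[\cdot]$ Teichmüller lift, well-ordered support), valuation $v_p$ = minimum of support, $C_x(\alpha)=\alpha_x$. $\zeta_{2(p-1)}$ is a fixed primitive $2(p-1)$-th root of unity in $\bar{\mathbb{F}}_p$, identified with its Teichmüller lift. For $P(T)=\sum_{k=0}^Na_kT^{N-k}$ ($a_0,a_N\ne0$): $\mathrm{NP}(P)$ is the lower convex hull of $(k,v_p(a_k))$; $m_{\max}$ is the largest breakpoint $<N$; maximal slope $s_{\max}=\frac{v_p(a_N)-v_p(a_{m_{\max}})}{N-m_{\max}}$; residue polynomial $\mathrm{Res}_P(T)=\sum_{k=0}^{N-m_{\max}}C_{v_p(a_{m_{\max}})+s_{\max}(N-m_{\max}-k)}(a_{N-k})T^k$. Algorithm: $\zeta_{p^n}^{(-1)}=0$; for $i\ge0$, $\Phi^{(i,n)}(T)=\Phi_{p^n}(T+\zeta_{p^n}^{(i-1)})$, $s_i$ its maximal slope, $z_i$ a chosen root of $\mathrm{Res}_{\Phi^{(i,n)}}$, and $\zeta_{p^n}^{(i)}=\zeta_{p^n}^{(i-1)}+[z_i]p^{s_i}$. *)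

theory Defs
  imports "HOL-Computational_Algebra.Computational_Algebra" "HOL-Number_Theory.Cong"
begin

text \<open>An element sum_x [alpha_x] p^x of L_p is represented by its coefficient function
  x |-> alpha_x = C_x(alpha), of type rat => F, where F plays the role of the algebraic
  closure of F_p.\<close>

type_synonym 'F mn = "rat \<Rightarrow> 'F"

definition mn_val :: "'F::zero mn \<Rightarrow> rat" where
  "mn_val a = (LEAST x. a x \<noteq> 0)"

definition mn_mono :: "'F::zero \<Rightarrow> rat \<Rightarrow> 'F mn" where
  "mn_mono z s = (\<lambda>x. if x = s then z else 0)"

text \<open>Teichmueller digits of an integer m (as an element of Z_p inside L_p):
  the unique digits d_i in {0..p-1} with m = sum_i [d_i] p^i.  Since the Teichmueller
  lift of d satisfies [d] = d^(p^k) mod p^k, this is characterised by the congruences below.\<close>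
definition teich_digits :: "nat \<Rightarrow> int \<Rightarrow> nat \<Rightarrow> int" where
  "teich_digits p m = (THE d. (\<forall>i. 0 \<le> d i \<and> d i < int p) \<and>
      (\<forall>k. [m = (\<Sum>i<k. d i ^ (p ^ k) * int p ^ i)] (mod (int p ^ k))))"

definition int_mn :: "nat \<Rightarrow> int \<Rightarrow> 'F::ring_1 mn" where
  "int_mn p m = (\<lambda>x. if x \<in> \<nat> then of_int (teich_digits p m (nat \<lfloor>x\<rfloor>)) else 0)"

text \<open>Lower convex hull of the points (k, v_p(a_k)), a_k nonzero, as a function on [0,N]:
  the supremum of all affine functions lying below all the points.\<close>
definition np_fun :: "(nat \<Rightarrow> 'F::zero mn) \<Rightarrow> nat \<Rightarrow> real \<Rightarrow> real" where
  "np_fun a N x = Sup {c * x + d | c d :: real.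
      \<forall>k\<le>N. a k \<noteq> (\<lambda>_. 0) \<longrightarrow> c * real k + d \<le> real_of_rat (mn_val (a k))}"

definition np_breakpoint :: "(nat \<Rightarrow> 'F::zero mn) \<Rightarrow> nat \<Rightarrow> nat \<Rightarrow> bool" where
  "np_breakpoint a N m \<longleftrightarrow> m \<le> N \<and> (m = 0 \<or> m = N \<or>
      np_fun a N (real m) - np_fun a N (real m - 1) \<noteq> np_fun a N (real m + 1) - np_fun a N (real m))"

definition np_mmax :: "(nat \<Rightarrow> 'F::zero mn) \<Rightarrow> nat \<Rightarrow> nat" where
  "np_mmax a N = (GREATEST m. np_breakpoint a N m \<and> m < N)"

definition np_smax :: "(nat \<Rightarrow> 'F::zero mn) \<Rightarrow> nat \<Rightarrow> rat" where
  "np_smax a N = (mn_val (a N) - mn_val (a (np_mmax a N))) / of_nat (N - np_mmax a N)"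

definition res_poly :: "(nat \<Rightarrow> 'F::comm_monoid_add mn) \<Rightarrow> nat \<Rightarrow> 'F poly" where
  "res_poly a N = (let m = np_mmax a N; s = np_smax a N in
      (\<Sum>k\<le>N - m. monom (a (N - k) (mn_val (a m) + s * of_nat (N - m - k))) k))"

text \<open>Coefficient sequence a_k (coefficient of T^(N-k)), N = degree P, of an integer polynomial.\<close>
definition int_poly_mn :: "nat \<Rightarrow> int poly \<Rightarrow> nat \<Rightarrow> 'F::ring_1 mn" where
  "int_poly_mn p P k = int_mn p (coeff P (degree P - k))"

definition cyclo_pp :: "nat \<Rightarrow> nat \<Rightarrow> int poly" where
  "cyclo_pp p n = (\<Sum>k<p. monom 1 (p ^ (n - 1) * k))"

end

theory Submission
  imports Defs
begin

lemma binom_cong_int: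
  assumes "prime p"
  shows "[((a::int) + b) ^ p = a ^ p + b ^ p] (mod int p)"
proof -
  have p1: "p > 1" using assms prime_gt_1_nat by blast
  have "(a + b) ^ p = (\<Sum>k\<le>p. of_nat (p choose k) * a ^ k * b ^ (p - k))"
    by (rule binomial_ring)
  moreover have "[(\<Sum>k\<le>p. of_nat (p choose k) * a ^ k * b ^ (p - k))
      = (\<Sum>k\<le>p. (if k = 0 then b ^ p else 0) + (if k = p then a ^ p else 0))] (mod int p)"
  proof (rule cong_sum)
    fix k assume k: "k \<in> {..p}"
    show "[of_nat (p choose k) * a ^ k * b ^ (p - k) = (if k = 0 then b ^ p else 0) + (if k = p then a ^ p else 0)] (mod int p)"
    proof (cases "k = 0 \<or> k = p")
      case True then show ?thesis using p1 by auto
    next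
      case False
      then have "p dvd (p choose k)" using k p1 by (intro dvd_choose_prime assms) auto
      then have "int p dvd of_nat (p choose k) * a ^ k * b ^ (p - k)"
        by (metis dvd_mult2 int_dvd_int_iff)
      then show ?thesis using False by (simp add: cong_0_iff)
    qed
  qed
  moreover have "(\<Sum>k\<le>p. (if k = 0 then b ^ p else 0) + (if k = p then a ^ p else (0::int))) = a ^ p + b ^ p"
    by (simp add: sum.distrib)
  ultimately show ?thesis by simp
qed

lemma fermat_nat_int:
  assumes "prime p" shows "[int x ^ p = int x] (mod int p)"
proof (induction x)
  case 0 then show ?case using assms prime_gt_0_nat by (simp add: power_0_left)
next
  case (Suc x)
  have "[(int x + 1) ^ p = int x ^ p + 1 ^ p] (mod int p)" by (rule binom_cong_int[OF assms])
  then have "[(int x + 1) ^ p = int x + 1] (mod int p)" using Suc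
    by (metis cong_add_rcancel_0 cong_add cong_refl cong_trans power_one)
  then show ?case by (simp add: add.commute)
qed

lemma fermat_int:
  assumes "prime p" shows "[(x::int) ^ p = x] (mod int p)"
proof -
  define a where "a = nat (x mod int p)"
  have p0: "p > 0" using assms prime_gt_0_nat by blast
  have xa: "[x = int a] (mod int p)" unfolding a_def using p0
    by (simp add: cong_def)
  have "[int a ^ p = int a] (mod int p)" by (rule fermat_nat_int[OF assms])
  moreover have "[x ^ p = int a ^ p] (mod int p)" using xa by (rule cong_pow)
  ultimately show ?thesis using xa
    by (meson cong_sym cong_trans)
qed

lemma lift_cong:
  assumes "prime p" "[(a::int) = b] (mod int p ^ j)" "j \<ge> 1"
  shows "[a ^ p = b ^ p] (mod int p ^ Suc j)"
proof -
  have p0: "p > 0" using assms prime_gt_0_nat by blast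
  have ab1: "[a = b] (mod int p)" using assms(2,3)
    by (metis cong_dvd_modulus dvd_power le_numeral_extra(2) not_one_le_zero of_nat_0_less_iff p0 gr0I)
  define S where "S = (\<Sum>i<p. b ^ (p - Suc i) * a ^ i)"
  have fac: "a ^ p - b ^ p = (a - b) * S" unfolding S_def by (rule power_diff_sumr2)
  have "[S = (\<Sum>i<p. b ^ (p - Suc i) * b ^ i)] (mod int p)"
    unfolding S_def by (intro cong_sum cong_mult cong_pow ab1 cong_refl)
  also have "(\<Sum>i<p. b ^ (p - Suc i) * b ^ i) = (\<Sum>i<p. b ^ (p - 1))"
    by (intro sum.cong refl) (simp add: power_add[symmetric])
  also have "\<dots> = int p * b ^ (p - 1)" by simp
  finally have "[S = int p * b ^ (p - 1)] (mod int p)" .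
  moreover have "[int p * b ^ (p - 1) = 0] (mod int p)" by (simp add: cong_0_iff)
  ultimately have "int p dvd S" using cong_trans cong_0_iff by blast
  moreover have "int p ^ j dvd a - b" using assms(2) by (simp add: cong_iff_dvd_diff)
  ultimately have "int p ^ j * int p dvd (a - b) * S" by (metis mult_dvd_mono)
  then show ?thesis unfolding cong_iff_dvd_diff fac by (simp add: mult.commute)
qed

lemma frob_step:
  assumes "prime p"
  shows "[(x::int) ^ (p ^ Suc a) = x ^ (p ^ a)] (mod int p ^ Suc a)"
proof (induction a)
  case 0
  then show ?case using fermat_int[OF assms] by simp
next
  case (Suc a)
  have "[(x ^ (p ^ Suc a)) ^ p = (x ^ (p ^ a)) ^ p] (mod int p ^ Suc (Suc a))"
    by (rule lift_cong[OF assms Suc]) simp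
  then show ?case by (simp add: power_mult[symmetric] mult.commute)
qed

lemma frob_ge:
  assumes "prime p" "K \<le> Suc a"
  shows "[(x::int) ^ (p ^ (a + b)) = x ^ (p ^ a)] (mod int p ^ K)"
proof (induction b)
  case 0 then show ?case by simp
next
  case (Suc b)
  have "[x ^ (p ^ Suc (a + b)) = x ^ (p ^ (a + b))] (mod int p ^ Suc (a + b))"
    by (rule frob_step[OF assms(1)])
  then have "[x ^ (p ^ Suc (a + b)) = x ^ (p ^ (a + b))] (mod int p ^ K)"
    by (rule cong_dvd_modulus) (rule le_imp_power_dvd, use assms(2) in simp)
  then show ?case using Suc by (metis add_Suc_right cong_trans)
qed

lemma frob_cong:
  assumes "prime p" "K \<le> Suc a" "K \<le> Suc b"
  shows "[(x::int) ^ (p ^ a) = x ^ (p ^ b)] (mod int p ^ K)"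
proof (cases "a \<le> b")
  case True
  then obtain c where "b = a + c" by (metis le_add_diff_inverse)
  then show ?thesis using frob_ge[OF assms(1,2), of x c] by (simp add: cong_sym)
next
  case False
  then obtain c where "a = b + c" by (metis le_add_diff_inverse nat_le_linear)
  then show ?thesis using frob_ge[OF assms(1,3), of x c] by simp
qed


definition LK :: "nat \<Rightarrow> int \<Rightarrow> nat \<Rightarrow> (nat \<Rightarrow> int) \<Rightarrow> bool" where
  "LK p m K d \<longleftrightarrow> (\<forall>i<K. 0 \<le> d i \<and> d i < int p) \<and>
     [m = (\<Sum>i<K. d i ^ (p ^ K) * int p ^ i)] (mod (int p ^ K))"

lemma sum_exp_change:
  assumes "prime p" "K \<le> Suc a" "K \<le> Suc b"
  shows "[(\<Sum>i<K'. d i ^ (p ^ a) * int p ^ i) = (\<Sum>i<K'. d i ^ (p ^ b) * int p ^ i)] (mod int p ^ K)"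
  by (intro cong_sum cong_mult frob_cong[OF assms] cong_refl)

lemma LK_restrict:
  assumes "prime p" "LK p m K d" "K' \<le> K"
  shows "LK p m K' d"
proof -
  have c1: "[m = (\<Sum>i<K. d i ^ (p ^ K) * int p ^ i)] (mod (int p ^ K'))"
    using assms(2,3) unfolding LK_def by (metis cong_dvd_modulus le_imp_power_dvd)
  have split: "(\<Sum>i<K. d i ^ (p ^ K) * int p ^ i) = (\<Sum>i<K'. d i ^ (p ^ K) * int p ^ i) + (\<Sum>i\<in>{K'..<K}. d i ^ (p ^ K) * int p ^ i)"
    using assms(3) sum.atLeastLessThan_concat[of 0 K' K "\<lambda>i. d i ^ (p ^ K) * int p ^ i"] by (simp add: lessThan_atLeast0)
  have "int p ^ K' dvd (\<Sum>i\<in>{K'..<K}. d i ^ (p ^ K) * int p ^ i)"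
    by (rule dvd_sum, rule dvd_mult, rule le_imp_power_dvd) auto
  then have c2: "[(\<Sum>i<K. d i ^ (p ^ K) * int p ^ i) = (\<Sum>i<K'. d i ^ (p ^ K) * int p ^ i)] (mod (int p ^ K'))"
    unfolding split by (simp add: cong_iff_dvd_diff)
  have c3: "[(\<Sum>i<K'. d i ^ (p ^ K) * int p ^ i) = (\<Sum>i<K'. d i ^ (p ^ K') * int p ^ i)] (mod (int p ^ K'))"
    by (rule sum_exp_change[OF assms(1)]) (use assms(3) in auto)
  have "[m = (\<Sum>i<K'. d i ^ (p ^ K') * int p ^ i)] (mod (int p ^ K'))"
    using c1 c2 c3 cong_trans by blast
  then show ?thesis using assms(2,3) unfolding LK_def by auto
qed

lemma LK_extend:
  assumes "prime p" "LK p m K d"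
  shows "\<exists>e. LK p m (Suc K) e"
proof -
  have p0: "p > 0" using assms prime_gt_0_nat by blast
  define S where "S = (\<Sum>i<K. d i ^ (p ^ Suc K) * int p ^ i)"
  have "[m = S] (mod int p ^ K)"
    using assms(2) sum_exp_change[OF assms(1), where K=K and a=K and b="Suc K" and K'=K and d=d] unfolding LK_def S_def
    by (meson cong_trans le_SucI order_refl)
  then obtain t where t: "m - S = int p ^ K * t" by (metis cong_iff_dvd_diff cong_sym dvd_def)
  define e where "e = d(K := t mod int p)"
  have eK: "[e K ^ (p ^ Suc K) = t] (mod int p)"
  proof -
    have "[e K ^ (p ^ Suc K) = e K ^ (p ^ 0)] (mod int p ^ 1)"
      by (rule frob_cong[OF assms(1)]) auto
    moreover have "[e K = t] (mod int p)" unfolding e_def by (simp add: cong_def)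
    ultimately show ?thesis by (simp add: cong_trans)
  qed
  then have "int p dvd e K ^ (p ^ Suc K) - t" by (simp add: cong_iff_dvd_diff cong_sym_eq)
  then have "int p ^ K * int p dvd (e K ^ (p ^ Suc K) - t) * int p ^ K"
    by (simp add: mult.commute)
  then have eK2: "[e K ^ (p ^ Suc K) * int p ^ K = t * int p ^ K] (mod int p ^ Suc K)"
    by (simp add: cong_iff_dvd_diff algebra_simps)
  have "(\<Sum>i<Suc K. e i ^ (p ^ Suc K) * int p ^ i) = S + e K ^ (p ^ Suc K) * int p ^ K"
    unfolding S_def e_def by simp
  moreover have "[S + e K ^ (p ^ Suc K) * int p ^ K = S + t * int p ^ K] (mod int p ^ Suc K)"
    by (intro cong_add cong_refl eK2)
  moreover have "S + t * int p ^ K = m" using t by (simp add: algebra_simps)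
  ultimately have "[m = (\<Sum>i<Suc K. e i ^ (p ^ Suc K) * int p ^ i)] (mod int p ^ Suc K)"
    by (simp add: cong_sym)
  moreover have "\<forall>i<Suc K. 0 \<le> e i \<and> e i < int p"
    using assms(2) p0 unfolding LK_def e_def by (auto simp: less_Suc_eq)
  ultimately show ?thesis unfolding LK_def by blast
qed

lemma LK_exists:
  assumes "prime p" shows "\<exists>d. LK p m K d"
proof (induction K)
  case 0 then show ?case by (auto simp: LK_def)
next
  case (Suc K) then show ?case using LK_extend[OF assms] by blast
qed

lemma LK_unique:
  assumes "prime p" "LK p m K d" "LK p m K e" "i < K"
  shows "d i = e i"
  using assms(4)
proof (induction i rule: less_induct)
  case (less i)
  have Ld: "LK p m (Suc i) d" and Le: "LK p m (Suc i) e"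
    using LK_restrict[OF assms(1)] assms(2,3) less.prems by (auto simp: Suc_le_eq)
  define q where "q = p ^ Suc i"
  have same: "(\<Sum>j<i. d j ^ q * int p ^ j) = (\<Sum>j<i. e j ^ q * int p ^ j)"
    using less.IH less.prems by (intro sum.cong) auto
  have "[(\<Sum>j<Suc i. d j ^ q * int p ^ j) = (\<Sum>j<Suc i. e j ^ q * int p ^ j)] (mod int p ^ Suc i)"
    using Ld Le unfolding LK_def q_def by (meson cong_sym cong_trans)
  then have "int p ^ Suc i dvd (d i ^ q - e i ^ q) * int p ^ i"
    using same by (simp add: cong_iff_dvd_diff algebra_simps)
  then have "int p * int p ^ i dvd (d i ^ q - e i ^ q) * int p ^ i"
    by simp
  then have "int p dvd d i ^ q - e i ^ q"
    using assms(1) by (metis dvd_mult_cancel_right mult_cancel_right power_not_zero of_nat_eq_0_iff not_prime_0 dvd_times_right_cancel_iff)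
  then have c: "[d i ^ q = e i ^ q] (mod int p)" by (simp add: cong_iff_dvd_diff)
  have fd: "[d i ^ q = d i ^ (p ^ 0)] (mod int p ^ 1)" and fe: "[e i ^ q = e i ^ (p ^ 0)] (mod int p ^ 1)"
    unfolding q_def by (rule frob_cong[OF assms(1)]; simp)+
  have "[d i = e i] (mod int p)" using c fd fe by (simp, meson cong_sym cong_trans)
  moreover have "0 \<le> d i" "d i < int p" "0 \<le> e i" "e i < int p"
    using Ld Le unfolding LK_def by auto
  ultimately show ?case by (metis cong_def mod_pos_pos_trivial)
qed

definition TD :: "nat \<Rightarrow> int \<Rightarrow> (nat \<Rightarrow> int) \<Rightarrow> bool" where
  "TD p m d \<longleftrightarrow> (\<forall>i. 0 \<le> d i \<and> d i < int p) \<and>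
      (\<forall>k. [m = (\<Sum>i<k. d i ^ (p ^ k) * int p ^ i)] (mod (int p ^ k)))"

lemma TD_LK: "TD p m d \<longleftrightarrow> (\<forall>K. LK p m K d)"
  unfolding TD_def LK_def by (meson lessI)

lemma teich_digits_TD: "teich_digits p m = (THE d. TD p m d)"
  unfolding teich_digits_def TD_def by simp

lemma TD_unique:
  assumes "prime p" "TD p m d" "TD p m e" shows "d = e"
proof
  fix i show "d i = e i" using LK_unique[OF assms(1), of m "Suc i" d e i] assms(2,3) TD_LK by blast
qed

lemma TD_exists:
  assumes "prime p" shows "\<exists>d. TD p m d"
proof -
  define D where "D K = (SOME d. LK p m K d)" for K
  have LD: "LK p m K (D K)" for K unfolding D_def using LK_exists[OF assms] by (metis someI_ex)
  define d where "d i = D (Suc i) i" for i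
  have eq: "d i = D K i" if "i < K" for i K
  proof -
    have "LK p m (Suc i) (D K)" using LK_restrict[OF assms LD] that by (simp add: Suc_le_eq)
    then show ?thesis unfolding d_def using LK_unique[OF assms LD] by blast
  qed
  have "LK p m K d" for K
  proof -
    have s: "(\<Sum>i<K. d i ^ (p ^ K) * int p ^ i) = (\<Sum>i<K. D K i ^ (p ^ K) * int p ^ i)"
      using eq by (intro sum.cong) auto
    show ?thesis using LD[of K] eq unfolding LK_def s by auto
  qed
  then show ?thesis using TD_LK by blast
qed

lemma teich_digits_eq:
  assumes "prime p" "TD p m d" shows "teich_digits p m = d"
  unfolding teich_digits_TD using assms TD_unique by blast

lemma teich_digits_TD': assumes "prime p" shows "TD p m (teich_digits p m)"
  unfolding teich_digits_TD using TD_exists[OF assms] TD_unique[OF assms] by (metis theI)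

lemma teich_digit0:
  assumes "prime p" shows "[teich_digits p m 0 = m] (mod int p)"
proof -
  have "LK p m 1 (teich_digits p m)" using teich_digits_TD'[OF assms] TD_LK by blast
  then have "[m = teich_digits p m 0 ^ p] (mod int p)" unfolding LK_def by simp
  then show ?thesis using fermat_int[OF assms] by (meson cong_sym cong_trans)
qed

lemma TD_1: assumes "prime p" shows "TD p 1 (\<lambda>i. if i = 0 then 1 else 0)"
proof -
  have p1: "int p > 1" using assms prime_gt_1_nat by auto
  have "[1 = (\<Sum>i<k. (if i = 0 then 1 else 0::int) ^ (p ^ k) * int p ^ i)] (mod int p ^ k)" for k
  proof (cases k)
    case 0 then show ?thesis by simp
  next
    case (Suc k')
    have "(\<Sum>i<k. (if i = 0 then 1 else 0::int) ^ (p ^ k) * int p ^ i) = (\<Sum>i<k. if i = 0 then 1 else 0)"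
      by (intro sum.cong) auto
    also have "\<dots> = 1" using Suc by (simp add: sum.delta)
    finally show ?thesis by simp
  qed
  then show ?thesis unfolding TD_def using p1 by auto
qed

lemma TD_p: assumes "prime p" shows "TD p (int p) (\<lambda>i. if i = 1 then 1 else 0)"
proof -
  have p1: "int p > 1" using assms prime_gt_1_nat by auto
  have "[int p = (\<Sum>i<k. (if i = 1 then 1 else 0::int) ^ (p ^ k) * int p ^ i)] (mod int p ^ k)" for k
  proof (cases "k \<ge> 2")
    case True
    have "(\<Sum>i<k. (if i = 1 then 1 else 0::int) ^ (p ^ k) * int p ^ i) = (\<Sum>i<k. if i = 1 then int p else 0)"
      using p1 by (intro sum.cong) auto
    also have "\<dots> = int p" using True by (simp add: sum.delta)
    finally show ?thesis by simp
  next
    case False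
    then have "k = 0 \<or> k = 1" by auto
    then show ?thesis using p1 by (auto simp: cong_def power_0_left)
  qed
  then show ?thesis unfolding TD_def using p1 by auto
qed

lemma TD_0: assumes "prime p" shows "TD p 0 (\<lambda>i. 0)"
proof -
  have "p > 0" using assms prime_gt_0_nat by blast
  then show ?thesis unfolding TD_def by (auto simp: power_0_left)
qed

lemma nat_rat_eq: "((x::rat) \<in> \<nat> \<and> nat \<lfloor>x\<rfloor> = j) \<longleftrightarrow> x = of_nat j"
  by (auto elim!: Nats_cases)

lemma int_mn_0: assumes "prime p" shows "int_mn p 0 = (\<lambda>_. 0)"
  unfolding int_mn_def teich_digits_eq[OF assms TD_0[OF assms]] by auto

lemma int_mn_1: assumes "prime p" shows "(int_mn p 1 :: 'F::ring_1 mn) = mn_mono 1 0"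
proof
  fix x :: rat
  show "(int_mn p 1 :: 'F mn) x = mn_mono 1 0 x"
    unfolding int_mn_def teich_digits_eq[OF assms TD_1[OF assms]] mn_mono_def
    using nat_rat_eq[of x 0] by auto
qed

lemma int_mn_p: assumes "prime p" shows "(int_mn p (int p) :: 'F::ring_1 mn) = mn_mono 1 1"
proof
  fix x :: rat
  show "(int_mn p (int p) :: 'F mn) x = mn_mono 1 1 x"
    unfolding int_mn_def teich_digits_eq[OF assms TD_p[OF assms]] mn_mono_def
    using nat_rat_eq[of x 1] by auto
qed

lemma mn_val_mono: assumes "z \<noteq> 0" shows "mn_val (mn_mono z s) = s"
  unfolding mn_val_def mn_mono_def using assms
  by (intro Least_equality) (auto split: if_splits)

lemma int_mn_support: "(int_mn p m :: 'F::ring_1 mn) x \<noteq> 0 \<Longrightarrow> \<exists>j. x = of_nat j"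
  unfolding int_mn_def by (auto split: if_splits elim!: Nats_cases)

lemma int_mn_at_nat: "(int_mn p m :: 'F::ring_1 mn) (of_nat j) = of_int (teich_digits p m j)"
  unfolding int_mn_def by simp

lemma int_mn_digit0:
  assumes "prime p" "CHAR('F::ring_1) = p"
  shows "(int_mn p m :: 'F mn) 0 = of_int m"
proof -
  have "(int_mn p m :: 'F mn) 0 = of_int (teich_digits p m 0)"
    using int_mn_at_nat[of p m 0] by simp
  also have "\<dots> = of_int m" using teich_digit0[OF assms(1), of m] assms(2)
    by (simp add: of_int_eq_iff_cong_CHAR)
  finally show ?thesis .
qed

lemma mn_val_ge1:
  assumes f0: "f \<noteq> (\<lambda>_. 0)" and supp: "\<And>x. f x \<noteq> 0 \<Longrightarrow> \<exists>j. x = of_nat j" and "f 0 = 0"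
  shows "mn_val f \<ge> 1"
proof -
  obtain x0 where x0: "f x0 \<noteq> 0" using f0 by auto
  then obtain j0 where j0: "x0 = of_nat j0" using supp by blast
  define k where "k = (LEAST k::nat. f (of_nat k) \<noteq> 0)"
  have fk: "f (of_nat k) \<noteq> 0" unfolding k_def using LeastI[of "\<lambda>k. f (of_nat k) \<noteq> 0" j0] x0 j0 by simp
  have "mn_val f = of_nat k"
    unfolding mn_val_def
  proof (rule Least_equality)
    show "f (of_nat k) \<noteq> 0" by (rule fk)
    fix y assume "f y \<noteq> 0"
    then obtain j where j: "y = of_nat j" using supp by blast
    then have "k \<le> j" unfolding k_def using \<open>f y \<noteq> 0\<close> Least_le[of "\<lambda>k. f (of_nat k) \<noteq> 0" j] by simp
    then show "of_nat k \<le> y" using j by simp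
  qed
  moreover have "k \<noteq> 0" using fk assms(3) by (cases k) auto
  ultimately show ?thesis by simp
qed

lemma line_bound:
  fixes c d al be x N :: real
  assumes "d \<le> be" "c * N + d \<le> al * N + be" "0 \<le> x" "x \<le> N" "N > 0"
  shows "c * x + d \<le> al * x + be"
proof -
  have "x * (c * N + d) \<le> x * (al * N + be)" using assms by (intro mult_left_mono) auto
  moreover have "(N - x) * d \<le> (N - x) * be" using assms by (intro mult_left_mono) auto
  ultimately have "N * (c * x + d) \<le> N * (al * x + be)" by (simp add: algebra_simps)
  then show ?thesis using assms(5) by simp
qed

lemma np_fun_line:
  fixes a :: "nat \<Rightarrow> 'F::zero mn"
  assumes N: "N > 0" and a0: "a 0 \<noteq> (\<lambda>_. 0)" and aN: "a N \<noteq> (\<lambda>_. 0)"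
    and v0: "real_of_rat (mn_val (a 0)) = be"
    and vN: "real_of_rat (mn_val (a N)) = al * real N + be"
    and above: "\<And>k. k \<le> N \<Longrightarrow> a k \<noteq> (\<lambda>_. 0) \<Longrightarrow> al * real k + be \<le> real_of_rat (mn_val (a k))"
    and x: "0 \<le> x" "x \<le> real N"
  shows "np_fun a N x = al * x + be"
  unfolding np_fun_def
proof (rule cSup_eq_maximum)
  show "al * x + be \<in> {c * x + d |c d. \<forall>k\<le>N. a k \<noteq> (\<lambda>_. 0) \<longrightarrow> c * real k + d \<le> real_of_rat (mn_val (a k))}"
    using above by blast
  fix y assume "y \<in> {c * x + d |c d. \<forall>k\<le>N. a k \<noteq> (\<lambda>_. 0) \<longrightarrow> c * real k + d \<le> real_of_rat (mn_val (a k))}"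
  then obtain c d where y: "y = c * x + d" and h: "\<forall>k\<le>N. a k \<noteq> (\<lambda>_. 0) \<longrightarrow> c * real k + d \<le> real_of_rat (mn_val (a k))"
    by blast
  have "d \<le> be" using h a0 v0 by (metis le0 mult_zero_right of_nat_0 add_0)
  moreover have "c * real N + d \<le> al * real N + be" using h aN vN by auto
  ultimately show "y \<le> al * x + be" unfolding y using line_bound x N by auto
qed

lemma np_mmax_line:
  fixes a :: "nat \<Rightarrow> 'F::zero mn"
  assumes N: "N > 0" and a0: "a 0 \<noteq> (\<lambda>_. 0)" and aN: "a N \<noteq> (\<lambda>_. 0)"
    and v0: "real_of_rat (mn_val (a 0)) = be"
    and vN: "real_of_rat (mn_val (a N)) = al * real N + be"
    and above: "\<And>k. k \<le> N \<Longrightarrow> a k \<noteq> (\<lambda>_. 0) \<Longrightarrow> al * real k + be \<le> real_of_rat (mn_val (a k))"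
  shows "np_mmax a N = 0"
  unfolding np_mmax_def
proof (rule Greatest_equality)
  show "np_breakpoint a N 0 \<and> 0 < N" using N unfolding np_breakpoint_def by simp
  fix m assume m: "np_breakpoint a N m \<and> m < N"
  show "m \<le> 0"
  proof (rule ccontr)
    assume "\<not> m \<le> 0"
    then have m0: "m \<ge> 1" by simp
    have f: "np_fun a N x = al * x + be" if "0 \<le> x" "x \<le> real N" for x
      by (rule np_fun_line[OF assms that])
    have "np_fun a N (real m) = al * real m + be" using m by (intro f) auto
    moreover have "np_fun a N (real m - 1) = al * (real m - 1) + be" using m m0 by (intro f) auto
    moreover have "np_fun a N (real m + 1) = al * (real m + 1) + be" using m by (intro f) auto
    ultimately show False using m m0 unfolding np_breakpoint_def by (auto simp: algebra_simps)
  qed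
qed

lemma frob_add:
  fixes x y :: "'a::comm_ring_1"
  assumes "CHAR('a) = p" "prime p"
  shows "(x + y) ^ p = x ^ p + y ^ p"
proof -
  have p1: "p > 1" using assms(2) prime_gt_1_nat by blast
  have "(x + y) ^ p = (\<Sum>k\<le>p. of_nat (p choose k) * x ^ k * y ^ (p - k))"
    by (rule binomial_ring)
  also have "\<dots> = (\<Sum>k\<le>p. (if k = 0 then y ^ p else 0) + (if k = p then x ^ p else 0))"
  proof (intro sum.cong refl)
    fix k assume k: "k \<in> {..p}"
    show "of_nat (p choose k) * x ^ k * y ^ (p - k) = (if k = 0 then y ^ p else 0) + (if k = p then x ^ p else 0)"
    proof (cases "k = 0 \<or> k = p")
      case True then show ?thesis using p1 by auto
    next
      case False
      then have "p dvd (p choose k)" using k p1 by (intro dvd_choose_prime assms(2)) auto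
      then have "of_nat (p choose k) = (0::'a)" using assms(1) by (simp add: of_nat_eq_0_iff_char_dvd)
      then show ?thesis using False by simp
    qed
  qed
  also have "\<dots> = x ^ p + y ^ p" by (simp add: sum.distrib)
  finally show ?thesis .
qed

lemma frob_add_pow:
  fixes x y :: "'a::comm_ring_1"
  assumes "CHAR('a) = p" "prime p"
  shows "(x + y) ^ (p ^ k) = x ^ (p ^ k) + y ^ (p ^ k)"
proof (induction k)
  case 0 then show ?case by simp
next
  case (Suc k)
  have "(x + y) ^ (p ^ Suc k) = ((x + y) ^ (p ^ k)) ^ p" by (simp add: power_mult[symmetric] mult.commute)
  also have "\<dots> = (x ^ (p ^ k)) ^ p + (y ^ (p ^ k)) ^ p" using Suc frob_add[OF assms] by simp
  also have "\<dots> = x ^ (p ^ Suc k) + y ^ (p ^ Suc k)" by (simp add: power_mult[symmetric] mult.commute)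
  finally show ?case .
qed

definition mpi :: "int poly \<Rightarrow> 'a::comm_ring_1 poly" where
  "mpi f = map_poly of_int f"

lemma mpi_coeff: "coeff (mpi f :: 'a::comm_ring_1 poly) j = of_int (coeff f j)"
  unfolding mpi_def by (simp add: coeff_map_poly)

lemma mpi_add: "(mpi (f + g) :: 'a::comm_ring_1 poly) = mpi f + mpi g"
  by (rule poly_eqI) (simp add: mpi_coeff)

lemma mpi_mult: "(mpi (f * g) :: 'a::comm_ring_1 poly) = mpi f * mpi g"
  by (rule poly_eqI) (simp add: mpi_coeff coeff_mult)

lemma mpi_1: "(mpi 1 :: 'a::comm_ring_1 poly) = 1"
  by (rule poly_eqI) (simp add: mpi_coeff coeff_1)

lemma mpi_power: "(mpi (f ^ k) :: 'a::comm_ring_1 poly) = mpi f ^ k"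
  by (induction k) (simp_all add: mpi_1 mpi_mult)

lemma mpi_0: "(mpi 0 :: 'a::comm_ring_1 poly) = 0"
  by (simp add: mpi_def)

lemma mpi_sum: "(mpi (sum g A) :: 'a::comm_ring_1 poly) = (\<Sum>i\<in>A. mpi (g i))"
  by (induction A rule: infinite_finite_induct) (simp_all add: mpi_add mpi_0)

lemma mpi_11: "(mpi [:1, 1:] :: 'a::comm_ring_1 poly) = [:1, 1:]"
  by (rule poly_eqI) (simp add: mpi_coeff coeff_pCons split: nat.splits)

lemma pcompose_x_pow: "pcompose ([:0, 1:] ^ m) r = r ^ m"
  by (induction m) (simp_all add: pcompose_mult pcompose_pCons pcompose_1)

lemma cyclo_coeff:
  assumes "p > 0"
  shows "coeff (cyclo_pp p n) j = (if \<exists>k<p. j = p ^ (n - 1) * k then 1 else 0)"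
proof -
  define q where "q = p ^ (n - 1)"
  have q0: "q > 0" using assms unfolding q_def by simp
  have "coeff (cyclo_pp p n) j = (\<Sum>k<p. if q * k = j then 1 else 0)"
    unfolding cyclo_pp_def q_def by (simp add: coeff_sum coeff_monom)
  also have "\<dots> = (if \<exists>k<p. j = q * k then 1 else 0)"
  proof (cases "\<exists>k<p. j = q * k")
    case True
    then obtain k0 where k0: "k0 < p" "j = q * k0" by blast
    have "(\<Sum>k<p. if q * k = j then 1 else 0) = (\<Sum>k<p. if k = k0 then 1 else (0::int))"
      using q0 k0 by (intro sum.cong) auto
    also have "\<dots> = 1" using k0 by simp
    finally show ?thesis using True by simp
  next
    case False
    then show ?thesis by (auto intro!: sum.neutral)
  qed
  finally show ?thesis unfolding q_def .
qed

lemma cyclo_facts: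
  fixes n :: nat
  assumes "prime p"
  defines "N \<equiv> p ^ (n - 1) * (p - 1)"
  shows "degree (cyclo_pp p n) = N" "coeff (cyclo_pp p n) N = 1" "coeff (cyclo_pp p n) 0 = 1"
    "\<And>j. coeff (cyclo_pp p n) j \<in> {0, 1}" "poly (cyclo_pp p n) 1 = int p"
proof -
  have p0: "p > 0" using assms prime_gt_0_nat by blast
  note c = cyclo_coeff[OF p0, of n]
  show cN: "coeff (cyclo_pp p n) N = 1" unfolding c N_def using p0 by auto
  show "coeff (cyclo_pp p n) 0 = 1" unfolding c using p0 by auto
  show "\<And>j. coeff (cyclo_pp p n) j \<in> {0, 1}" unfolding c by auto
  have "coeff (cyclo_pp p n) j = 0" if "j > N" for j
  proof -
    have "\<not> (\<exists>k<p. j = p ^ (n - 1) * k)"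
    proof
      assume "\<exists>k<p. j = p ^ (n - 1) * k"
      then obtain k where "k < p" "j = p ^ (n - 1) * k" by blast
      then have "k \<le> p - 1" by simp
      then have "j \<le> N" unfolding N_def using \<open>j = p ^ (n - 1) * k\<close> by simp
      then show False using that by simp
    qed
    then show ?thesis unfolding c by simp
  qed
  then show "degree (cyclo_pp p n) = N"
    using cN by (metis degree_le le_degree antisym one_neq_zero)
  show "poly (cyclo_pp p n) 1 = int p" unfolding cyclo_pp_def by (simp add: poly_sum poly_monom)
qed

lemma cyclo1_eq: "pcompose (cyclo_pp p n) [:1, 1:] = (\<Sum>k<p. [:1, 1:] ^ (p ^ (n - 1) * k))"
  unfolding cyclo_pp_def by (simp add: pcompose_sum monom_altdef pcompose_x_pow)

lemma cyclo1_mod: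
  assumes "CHAR('F::field) = p" "prime p"
  shows "(mpi (pcompose (cyclo_pp p n) [:1, 1:]) :: 'F poly) = monom 1 (p ^ (n - 1) * (p - 1))"
proof -
  define q where "q = p ^ (n - 1)"
  define X where "X = ([:0, 1:] :: 'F poly)"
  have ch: "CHAR('F poly) = p" using assms(1) by simp
  have Y: "([:1, 1:] :: 'F poly) ^ q = X ^ q + 1"
  proof -
    have e: "([:1, 1:] :: 'F poly) = X + 1" by (simp add: X_def one_pCons)
    show ?thesis unfolding e q_def using frob_add_pow[OF ch assms(2), of X 1 "n - 1"] by simp
  qed
  define S where "S = (\<Sum>k<p. ([:1, 1:] :: 'F poly) ^ (q * k))"
  have mS: "(mpi (pcompose (cyclo_pp p n) [:1, 1:]) :: 'F poly) = S"
    unfolding cyclo1_eq S_def q_def by (simp add: mpi_sum mpi_power mpi_11)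
  have S2: "S = (\<Sum>k<p. (X ^ q + 1) ^ k)" unfolding S_def by (simp add: power_mult Y)
  have "(X ^ q + 1) ^ p - 1 = ((X ^ q + 1) - 1) * S" unfolding S2 by (rule power_diff_1_eq)
  moreover have "(X ^ q + 1) ^ p = (X ^ q) ^ p + 1"
    using frob_add[OF ch assms(2), of "X ^ q" 1] by simp
  ultimately have "X ^ q * S = X ^ q * X ^ (q * (p - 1))"
    using assms(2) prime_gt_0_nat[OF assms(2)]
    by (simp add: power_mult[symmetric] power_add[symmetric])
       (metis Suc_pred add.commute mult_Suc_right)
  then have "S = X ^ (q * (p - 1))" by (simp add: X_def)
  then show ?thesis using mS unfolding X_def q_def by (simp add: monom_altdef)
qed

lemma order_pow:
  fixes g :: "'a::idom poly"
  assumes "g \<noteq> 0" shows "order a (g ^ k) = k * order a g"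
proof (induction k)
  case 0 then show ?case by simp
next
  case (Suc k)
  have "order a (g ^ Suc k) = order a (g * g ^ k)" by simp
  also have "\<dots> = order a g + order a (g ^ k)" using assms by (intro order_mult) simp
  finally show ?case using Suc by simp
qed

lemma order_simple:
  fixes g :: "'a::idom poly"
  assumes "g \<noteq> 0" "poly g a = 0" "poly (pderiv g) a \<noteq> 0"
  shows "order a g = 1"
proof -
  have "order a g \<noteq> 0" using assms order_root by blast
  moreover have "\<not> order a g \<ge> 2"
  proof
    assume "order a g \<ge> 2"
    then have "[:-a, 1:] ^ Suc 1 dvd g" using order_1 power_le_dvd by (metis Suc_1)
    then obtain h where h: "g = [:-a, 1:] ^ Suc 1 * h" by (elim dvdE)
    have "pderiv g = [:- a, 1:] ^ Suc 1 * pderiv h + smult (of_nat (Suc 1)) (h * [:- a, 1:] ^ 1)"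
      unfolding h by (rule lemma_order_pderiv1)
    then have "poly (pderiv g) a = 0" by simp
    then show False using assms(3) by simp
  qed
  ultimately show ?thesis by simp
qed

lemma res_order:
  fixes \<zeta> :: "'F::field"
  assumes "prime p" "p \<ge> 3" "CHAR('F) = p"
    and "\<zeta> ^ (2 * (p - 1)) = 1" and "\<forall>j. 0 < j \<and> j < 2 * (p - 1) \<longrightarrow> \<zeta> ^ j \<noteq> 1"
  shows "poly (1 + monom 1 (p ^ (n - 1) * (p - 1))) ((-1) ^ n * \<zeta>) = 0"
    "order ((-1) ^ n * \<zeta>) (1 + monom 1 (p ^ (n - 1) * (p - 1))) = p ^ (n - 1)"
proof -
  define z where "z = (-1) ^ n * \<zeta>"
  define q where "q = p ^ (n - 1)"
  have oddp: "odd p" using assms(1,2) prime_odd_nat by auto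
  then have evp: "even (p - 1)" by simp
  have "(\<zeta> ^ (p - 1)) ^ 2 = 1" using assms(4) by (simp add: power_mult[symmetric] mult.commute)
  then have "\<zeta> ^ (p - 1) = 1 \<or> \<zeta> ^ (p - 1) = -1" by (simp add: power2_eq_1_iff)
  moreover have "\<zeta> ^ (p - 1) \<noteq> 1" using assms(2,5) by auto
  ultimately have zp: "\<zeta> ^ (p - 1) = -1" by simp
  have zz: "z ^ (p - 1) = -1"
  proof -
    have "z ^ (p - 1) = ((-1) ^ (p - 1)) ^ n * \<zeta> ^ (p - 1)"
      unfolding z_def by (simp add: power_mult_distrib power_mult[symmetric] mult.commute)
    also have "(-1::'F) ^ (p - 1) = 1" using evp by simp
    finally show ?thesis using zp by simp
  qed
  have z0: "z \<noteq> 0"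
    using zz assms(2) by (cases "p - 1") auto
  define g :: "'F poly" where "g = monom 1 (p - 1) + 1"
  have g0: "g \<noteq> 0"
  proof
    assume "g = 0"
    then have "coeff g (p - 1) = 0" by simp
    then show False using assms(2) unfolding g_def by (simp add: coeff_1)
  qed
  have pg: "poly g z = 0" unfolding g_def using zz by (simp add: poly_monom)
  have "pderiv g = monom (of_nat (p - 1)) (p - Suc (Suc 0))"
    unfolding g_def by (simp add: pderiv_add pderiv_monom)
  moreover have "(of_nat (p - 1) :: 'F) \<noteq> 0"
  proof
    assume "(of_nat (p - 1) :: 'F) = 0"
    then have "p dvd p - 1" using assms(3) by (simp add: of_nat_eq_0_iff_char_dvd)
    then have "p \<le> p - 1" by (rule dvd_imp_le) (use assms(2) in auto)
    then show False using assms(2) by simp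
  qed
  ultimately have pd: "poly (pderiv g) z \<noteq> 0" using z0 by (simp add: poly_monom)
  have og: "order z g = 1" by (rule order_simple[OF g0 pg pd])
  have ch: "CHAR('F poly) = p" using assms(3) by simp
  have "g ^ q = monom 1 (p - 1) ^ q + 1"
    unfolding g_def q_def using frob_add_pow[OF ch assms(1), of "monom 1 (p - 1)" 1 "n - 1"] by simp
  also have "\<dots> = 1 + monom 1 (q * (p - 1))" by (simp add: monom_power mult.commute add.commute)
  finally have R: "1 + monom 1 (q * (p - 1)) = g ^ q" by simp
  show "order ((-1) ^ n * \<zeta>) (1 + monom 1 (p ^ (n - 1) * (p - 1))) = p ^ (n - 1)"
    using R order_pow[OF g0, of z q] og unfolding z_def q_def by simp
  show "poly (1 + monom 1 (p ^ (n - 1) * (p - 1))) ((-1) ^ n * \<zeta>) = 0"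
    using R pg assms(2) unfolding z_def q_def by simp
qed

theorem proposition3p1:
  fixes p n :: nat and \<zeta> :: "'F::alg_closed_field"
  assumes "prime p" and "p \<ge> 3" and "n \<ge> 2"
    and "CHAR('F) = p"
    and "\<zeta> ^ (2 * (p - 1)) = 1" and "\<forall>j. 0 < j \<and> j < 2 * (p - 1) \<longrightarrow> \<zeta> ^ j \<noteq> 1"
  defines "\<Phi>0 \<equiv> cyclo_pp p n"
    and "\<Phi>1 \<equiv> pcompose (cyclo_pp p n) [:1, 1:]"
  defines "a0 \<equiv> (int_poly_mn p \<Phi>0 :: nat \<Rightarrow> 'F mn)"
    and "a1 \<equiv> (int_poly_mn p \<Phi>1 :: nat \<Rightarrow> 'F mn)"
  defines "s0 \<equiv> np_smax a0 (degree \<Phi>0)"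
    and "s1 \<equiv> np_smax a1 (degree \<Phi>1)"
    and "z1 \<equiv> (-1) ^ n * \<zeta>"
  shows "s0 = 0 \<and> poly (res_poly a0 (degree \<Phi>0)) 1 = 0
    \<and> mn_mono 1 s0 = (int_mn p 1 :: 'F mn)
    \<and> s1 = 1 / (of_nat (p ^ (n - 1) * (p - 1)))
    \<and> poly (res_poly a1 (degree \<Phi>1)) z1 = 0
    \<and> order z1 (res_poly a1 (degree \<Phi>1)) = p ^ (n - 1)
    \<and> s0 \<noteq> s1
    \<and> (\<lambda>x. mn_mono 1 s0 x + mn_mono z1 s1 x)
        = (\<lambda>x. mn_mono 1 0 x + mn_mono ((-1) ^ n * \<zeta>) (1 / of_nat (p ^ (n - 1) * (p - 1))) x)"
proof -
  note pr = assms(1) and ch = assms(4)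
  define N where "N = p ^ (n - 1) * (p - 1)"
  have p0: "p > 0" using pr prime_gt_0_nat by blast
  have N0: "N > 0" unfolding N_def using assms(2) by simp
  have dP0: "degree \<Phi>0 = N" unfolding \<Phi>0_def N_def by (rule cyclo_facts(1)[OF pr])
  have dP1: "degree \<Phi>1 = N" unfolding \<Phi>1_def using dP0 \<Phi>0_def by (simp add: degree_pcompose)
  have c1N: "coeff \<Phi>1 N = 1"
  proof -
    have "lead_coeff \<Phi>1 = lead_coeff \<Phi>0 * lead_coeff [:1, 1::int:] ^ degree \<Phi>0"
      unfolding \<Phi>1_def \<Phi>0_def by (rule lead_coeff_comp) simp
    then show ?thesis using dP0 dP1 cyclo_facts(2)[OF pr, of n] unfolding \<Phi>0_def N_def by simp
  qed
  have c10: "coeff \<Phi>1 0 = int p"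
    unfolding \<Phi>1_def poly_0_coeff_0[symmetric] poly_pcompose
    using cyclo_facts(5)[OF pr, of n] by simp
  have c1dvd: "int p dvd coeff \<Phi>1 j" if "j \<noteq> N" for j
  proof -
    have "(of_int (coeff \<Phi>1 j) :: 'F) = coeff (mpi \<Phi>1 :: 'F poly) j" by (simp add: mpi_coeff)
    also have "\<dots> = 0" unfolding \<Phi>1_def cyclo1_mod[OF ch pr] N_def[symmetric] using that by simp
    finally show ?thesis using ch by (simp add: of_int_eq_0_iff_char_dvd)
  qed
  have a1k: "a1 k = int_mn p (coeff \<Phi>1 (N - k))" for k
    unfolding a1_def int_poly_mn_def dP1 ..
  have a0k: "a0 k = int_mn p (coeff \<Phi>0 (N - k))" for k
    unfolding a0_def int_poly_mn_def dP0 ..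
  have mono_nz: "mn_mono (1::'F) s \<noteq> (\<lambda>_. 0)" for s
    unfolding mn_mono_def by (metis one_neq_zero)
  have A10: "a1 0 = mn_mono 1 0" unfolding a1k using c1N int_mn_1[OF pr] by simp
  have A1N: "a1 N = mn_mono 1 1" unfolding a1k using c10 int_mn_p[OF pr] by simp
  have A1k: "1 \<le> mn_val (a1 k)" if "0 < k" "k \<le> N" "a1 k \<noteq> (\<lambda>_. 0)" for k
  proof (rule mn_val_ge1[OF that(3)])
    show "\<And>x. a1 k x \<noteq> 0 \<Longrightarrow> \<exists>j. x = of_nat j" unfolding a1k by (rule int_mn_support)
    have "int p dvd coeff \<Phi>1 (N - k)" using that by (intro c1dvd) auto
    then have "(of_int (coeff \<Phi>1 (N - k)) :: 'F) = 0" using ch by (simp add: of_int_eq_0_iff_char_dvd)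
    then show "a1 k 0 = 0" unfolding a1k using int_mn_digit0[OF pr ch] by simp
  qed
  have mm1: "np_mmax a1 N = 0"
  proof (rule np_mmax_line[where al = "1 / real N" and be = 0])
    show "N > 0" by (rule N0)
    show "a1 0 \<noteq> (\<lambda>_. 0)" "a1 N \<noteq> (\<lambda>_. 0)" unfolding A10 A1N by (rule mono_nz)+
    show "real_of_rat (mn_val (a1 0)) = 0" unfolding A10 by (simp add: mn_val_mono)
    show "real_of_rat (mn_val (a1 N)) = 1 / real N * real N + 0" unfolding A1N using N0 by (simp add: mn_val_mono)
    fix k assume k: "k \<le> N" "a1 k \<noteq> (\<lambda>_. 0)"
    show "1 / real N * real k + 0 \<le> real_of_rat (mn_val (a1 k))"
    proof (cases "k = 0")
      case True then show ?thesis using A10 by (simp add: mn_val_mono)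
    next
      case False
      then have "1 \<le> mn_val (a1 k)" using A1k k by simp
      then have "1 \<le> real_of_rat (mn_val (a1 k))" by (metis of_rat_1 of_rat_less_eq)
      moreover have "1 / real N * real k \<le> 1" using k N0 by (simp add: field_simps)
      ultimately show ?thesis by linarith
    qed
  qed
  have s1v: "s1 = 1 / of_nat N"
    unfolding s1_def dP1 np_smax_def mm1 A10 A1N by (simp add: mn_val_mono)
  have a0cases: "a0 k = (\<lambda>_. 0) \<or> a0 k = mn_mono 1 0" for k
    using cyclo_facts(4)[OF pr, of n "N - k"] unfolding a0k \<Phi>0_def
    using int_mn_0[OF pr] int_mn_1[OF pr] by auto
  have A00: "a0 0 = mn_mono 1 0" unfolding a0k using cyclo_facts(2)[OF pr, of n] int_mn_1[OF pr]
    unfolding \<Phi>0_def N_def by simp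
  have A0N: "a0 N = mn_mono 1 0" unfolding a0k using cyclo_facts(3)[OF pr, of n] int_mn_1[OF pr]
    unfolding \<Phi>0_def by simp
  have mm0: "np_mmax a0 N = 0"
  proof (rule np_mmax_line[where al = 0 and be = 0])
    show "N > 0" by (rule N0)
    show "a0 0 \<noteq> (\<lambda>_. 0)" "a0 N \<noteq> (\<lambda>_. 0)" unfolding A00 A0N by (rule mono_nz)+
    show "real_of_rat (mn_val (a0 0)) = 0" unfolding A00 by (simp add: mn_val_mono)
    show "real_of_rat (mn_val (a0 N)) = 0 * real N + 0" unfolding A0N by (simp add: mn_val_mono)
    fix k assume k: "k \<le> N" "a0 k \<noteq> (\<lambda>_. 0)"
    then have "a0 k = mn_mono 1 0" using a0cases by blast
    then show "0 * real k + 0 \<le> real_of_rat (mn_val (a0 k))" by (simp add: mn_val_mono)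
  qed
  have s0v: "s0 = 0"
    unfolding s0_def dP0 np_smax_def mm0 A00 A0N by (simp add: mn_val_mono)
  have res0: "poly (res_poly a0 (degree \<Phi>0)) 1 = 0"
  proof -
    have "res_poly a0 (degree \<Phi>0) = (\<Sum>k\<le>N. monom (a0 (N - k) 0) k)"
      unfolding res_poly_def Let_def dP0 mm0 s0_def[symmetric, unfolded dP0] s0v A00
      by (simp add: mn_val_mono)
    also have "poly \<dots> 1 = (\<Sum>k\<le>N. a0 (N - k) 0)" by (simp add: poly_sum poly_monom)
    also have "\<dots> = (\<Sum>k\<le>N. (of_int (coeff \<Phi>0 k) :: 'F))"
      by (intro sum.cong refl) (simp add: a0k int_mn_digit0[OF pr ch])
    also have "\<dots> = of_int (poly \<Phi>0 1)" by (simp add: poly_altdef dP0)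
    also have "\<dots> = 0" unfolding \<Phi>0_def cyclo_facts(5)[OF pr] using ch of_nat_CHAR[where 'a='F] by simp
    finally show ?thesis .
  qed
  have coef1: "a1 (N - k) (0 + 1 / of_nat N * of_nat (N - 0 - k)) = (if k = 0 \<or> k = N then 1 else 0)"
    if "k \<le> N" for k
  proof (cases "k = 0 \<or> k = N")
    case True
    then show ?thesis
    proof
      assume "k = 0" then show ?thesis using A1N N0 by (simp add: mn_mono_def)
    next
      assume "k = N" then show ?thesis using A10 N0 by (simp add: mn_mono_def)
    qed
  next
    case False
    define x :: rat where "x = 1 / of_nat N * of_nat (N - k)"
    have x0: "0 < x" "x < 1" unfolding x_def using False that N0 by (auto simp: field_simps)
    have "a1 (N - k) x = 0"
    proof (rule ccontr)
      assume "a1 (N - k) x \<noteq> 0"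
      then obtain j where "x = of_nat j" unfolding a1k using int_mn_support by blast
      then show False using x0 by (cases j) auto
    qed
    then show ?thesis using False unfolding x_def by simp
  qed
  have res1: "res_poly a1 (degree \<Phi>1) = 1 + monom 1 N"
  proof -
    have "res_poly a1 (degree \<Phi>1) = (\<Sum>k\<le>N. monom (if k = 0 \<or> k = N then 1 else 0) k)"
      unfolding res_poly_def Let_def dP1 mm1 s1_def[symmetric, unfolded dP1] s1v A10 diff_zero
    proof (intro sum.cong refl)
      fix k assume "k \<in> {..N}"
      then have "k \<le> N" by simp
      then show "monom (a1 (N - k) (mn_val (mn_mono (1::'F) 0) + 1 / of_nat N * of_nat (N - k))) k =
          monom (if k = 0 \<or> k = N then 1 else 0) k"
        using coef1 by (simp add: mn_val_mono)
    qed
    also have "\<dots> = 1 + monom 1 N"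
    proof (rule poly_eqI)
      fix j
      have "coeff (\<Sum>k\<le>N. monom (if k = 0 \<or> k = N then 1 else (0::'F)) k) j
          = (\<Sum>k\<le>N. if k = j then (if k = 0 \<or> k = N then 1 else 0) else 0)"
        by (simp add: coeff_sum coeff_monom)
      also have "\<dots> = (if j \<le> N then (if j = 0 \<or> j = N then 1 else 0) else 0)"
        by (simp add: sum.delta)
      also have "\<dots> = coeff (1 + monom 1 N) j" using N0 by (auto simp: coeff_1)
      finally show "coeff (\<Sum>k\<le>N. monom (if k = 0 \<or> k = N then 1 else (0::'F)) k) j = coeff (1 + monom 1 N) j" .
    qed
    finally show ?thesis .
  qed
  note ro = res_order[OF pr assms(2) ch assms(5) assms(6), of n]
  have s1v': "s1 = 1 / (of_nat (p ^ (n - 1) * (p - 1)))" using s1v unfolding N_def .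
  have s01: "s0 \<noteq> s1" using s0v s1v N0 by simp
  show ?thesis
  proof (intro conjI)
    show "s0 = 0" by (rule s0v)
    show "poly (res_poly a0 (degree \<Phi>0)) 1 = 0" by (rule res0)
    show "mn_mono 1 s0 = (int_mn p 1 :: 'F mn)" unfolding s0v by (rule int_mn_1[OF pr, symmetric])
    show "s1 = 1 / (of_nat (p ^ (n - 1) * (p - 1)))" by (rule s1v')
    show "poly (res_poly a1 (degree \<Phi>1)) z1 = 0" unfolding res1 z1_def N_def by (rule ro(1))
    show "order z1 (res_poly a1 (degree \<Phi>1)) = p ^ (n - 1)" unfolding res1 z1_def N_def by (rule ro(2))
    show "s0 \<noteq> s1" by (rule s01)
    show "(\<lambda>x. mn_mono 1 s0 x + mn_mono z1 s1 x)
        = (\<lambda>x. mn_mono 1 0 x + mn_mono ((-1) ^ n * \<zeta>) (1 / of_nat (p ^ (n - 1) * (p - 1))) x)"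
      unfolding s0v s1v' z1_def ..
  qed
qed

end
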